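(* Let $\pi\in\mathcal P(\mathbb R^d)$ satisfy the standing decomposition assumption with constants $\mathsf M,\mathsf L$ (defined in the context). Let $\mathsf P$ be the Random–Walk Metropolis kernel for $\pi$ with step size $h$, and assume $$0<h\le \frac{1}{\sqrt d}\min\Big\{\frac{1}{2\sqrt{\mathsf M}},\ \frac{1}{16\mathsf L}\Big\}.$$ Then for all $x,y\in\mathbb R^d$ with $\|x-y\|<h/4$, one has $\mathrm{TV}(\delta_x\mathsf P,\delta_y\mathsf P)<\tfrac34$.
   Context: Standing decomposition assumption: $\pi$ has a positive density with $\log\pi(x)=f(x)+g(x)$, where $f$ is differentiable with $\|\nabla f(x)-\nabla f(y)\|\le \mathsf M\|x-y\|$ for all $x,y$ ($f$ is $\mathsf M$-smooth), and $g$ is $\mathsf L$-Lipschitz: $|g(x)-g(y)|\le\mathsf L\|x-y\|$ for all $x,y$. Norms are Euclidean. Metropolis kernel with proposal kernel $\mathsf Q$: acceptance probability $\alpha(x,x')=\min\{1,\frac{\pi(x')\mathsf Q(x',x)}{\pi(x)\mathsf Q(x,x')}\}$ and $\mathsf P(x,y)=\alpha(x,y)\mathsf Q(x,y)+\big(1-\int\alpha(x,x')\mathsf Q(x,x')dx'\big)\delta_x(y)$. The Random–Walk Metropolis (RWM) kernel with step size $h>0$ uses $\mathsf Q(x,\cdot)=\mathcal N(x,h^2 I)$, so $\alpha(x,x')=\min\{1,\pi(x')/\pi(x)\}$. $\mathrm{TV}(\mu,\nu)=\sup_A|\mu(A)-\nu(A)|$ and $\delta_x\mathsf P=\mathsf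 P(x,\cdot)$. *)

theory Defs
  imports "HOL-Analysis.Analysis"
begin

definition rwm_proposal :: "real \<Rightarrow> 'a::euclidean_space \<Rightarrow> 'a \<Rightarrow> real" where
  "rwm_proposal h x y =
     (2 * pi * h\<^sup>2) powr (- real DIM('a) / 2) * exp (- (norm (y - x))\<^sup>2 / (2 * h\<^sup>2))"

definition rwm_accept :: "('a::euclidean_space \<Rightarrow> real) \<Rightarrow> 'a \<Rightarrow> 'a \<Rightarrow> real" where
  "rwm_accept p x x' = min 1 (p x' / p x)"

definition rwm_kernel :: "('a::euclidean_space \<Rightarrow> real) \<Rightarrow> real \<Rightarrow> 'a \<Rightarrow> 'a set \<Rightarrow> real" where
  "rwm_kernel p h x A =
     (LINT y:A|lborel. rwm_accept p x y * rwm_proposal h x y)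
     + (1 - (LINT y|lborel. rwm_accept p x y * rwm_proposal h x y)) * indicator A x"

definition rwm_tv :: "('a::euclidean_space \<Rightarrow> real) \<Rightarrow> real \<Rightarrow> 'a \<Rightarrow> 'a \<Rightarrow> real" where
  "rwm_tv p h x y = (SUP A \<in> sets (borel :: 'a measure). \<bar>rwm_kernel p h x A - rwm_kernel p h y A\<bar>)"

end

theory Submission
  imports Defs "HOL-Probability.Distributions"
begin

lemma norm_sq_basis: "(norm (z::'a::euclidean_space))\<^sup>2 = (\<Sum>b\<in>Basis. (z \<bullet> b)\<^sup>2)"
  unfolding power2_norm_eq_inner by (subst euclidean_inner) (simp add: power2_eq_square)

lemma powr_pow_aux: "0 < (a::real) \<Longrightarrow> (a powr r) ^ n = a powr (r * real n)"
  by (metis powr_powr powr_realpow powr_gt_zero)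

lemma proposal0_prod:
  assumes h: "0 < h"
  shows "rwm_proposal h 0 (z::'a::euclidean_space) = (\<Prod>b\<in>Basis. normal_density 0 h (z \<bullet> b))"
proof -
  have "(\<Prod>b\<in>Basis. normal_density 0 h (z \<bullet> b)) =
        (\<Prod>b\<in>(Basis::'a set). 1 / sqrt (2 * pi * h\<^sup>2)) * (\<Prod>b\<in>Basis. exp (- (z \<bullet> b)\<^sup>2 / (2 * h\<^sup>2)))"
    unfolding normal_density_def prod.distrib by simp
  also have "(\<Prod>b\<in>Basis. exp (- (z \<bullet> b)\<^sup>2 / (2 * h\<^sup>2))) = exp (\<Sum>b\<in>Basis. - (z \<bullet> b)\<^sup>2 / (2 * h\<^sup>2))"
    by (simp add: exp_sum)
  also have "(\<Sum>b\<in>Basis. - (z \<bullet> b)\<^sup>2 / (2 * h\<^sup>2)) = - (norm z)\<^sup>2 / (2 * h\<^sup>2)"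
    by (simp add: norm_sq_basis sum_divide_distrib[symmetric] sum_negf)
  also have "(\<Prod>b\<in>(Basis::'a set). 1 / sqrt (2 * pi * h\<^sup>2)) = (2 * pi * h\<^sup>2) powr (- real DIM('a) / 2)"
  proof -
    have p: "0 < 2 * pi * h\<^sup>2" using h by simp
    have "(\<Prod>b\<in>(Basis::'a set). 1 / sqrt (2 * pi * h\<^sup>2)) = (1 / sqrt (2 * pi * h\<^sup>2)) ^ DIM('a)"
      by simp
    also have "\<dots> = ((2 * pi * h\<^sup>2) powr (-1/2)) ^ DIM('a)"
      using p by (simp add: powr_minus_divide powr_half_sqrt)
    also have "\<dots> = (2 * pi * h\<^sup>2) powr (- real DIM('a) / 2)"
      using p powr_pow_aux[of "2 * pi * h\<^sup>2" "-1/2" "DIM('a)"] by simp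
    finally show ?thesis .
  qed
  finally show ?thesis by (simp add: rwm_proposal_def)
qed

lemma proposal_measurable[measurable]: "rwm_proposal h x \<in> borel_measurable (borel::'a::euclidean_space measure)"
  unfolding rwm_proposal_def by measurable

lemma gauss0:
  assumes h: "0 < h"
  shows "has_bochner_integral lborel (rwm_proposal h (0::'a::euclidean_space)) 1"
proof -
  interpret product_sigma_finite "\<lambda>_::'a. lborel::real measure" by standard
  define T where "T = (\<lambda>f. \<Sum>b\<in>(Basis::'a set). f b *\<^sub>R b)"
  have Tm[measurable]: "T \<in> measurable (Pi\<^sub>M Basis (\<lambda>_. lborel)) borel"
    unfolding T_def by measurable
  have eqT: "rwm_proposal h 0 (T f) = (\<Prod>b\<in>Basis. normal_density 0 h (f b))" for f
  proof -
    have "T f \<bullet> b = f b" if "b \<in> Basis" for b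
      using that unfolding T_def by (simp add: inner_sum_left inner_Basis if_distrib sum.delta cong: if_cong)
    then show ?thesis using proposal0_prod[OF h, of "T f"] by (simp cong: prod.cong)
  qed
  have int1: "integrable (Pi\<^sub>M Basis (\<lambda>_. lborel)) (\<lambda>f. \<Prod>b\<in>(Basis::'a set). normal_density 0 h (f b))"
    using h by (intro product_integrable_prod) auto
  have int2: "(\<integral>f. (\<Prod>b\<in>(Basis::'a set). normal_density 0 h (f b)) \<partial>Pi\<^sub>M Basis (\<lambda>_. lborel)) = 1"
    using h by (subst product_integral_prod) auto
  have L: "lborel = distr (Pi\<^sub>M Basis (\<lambda>_. lborel)) borel T"
    unfolding T_def by (rule lborel_eq)
  have "integrable lborel (rwm_proposal h (0::'a))"
    apply (subst L)
    apply (subst integrable_distr_eq[OF Tm])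
    using int1 eqT by auto
  moreover have "integral\<^sup>L lborel (rwm_proposal h (0::'a)) = 1"
    apply (subst L)
    apply (subst integral_distr[OF Tm])
    using int2 eqT by auto
  ultimately show ?thesis by (simp add: has_bochner_integral_iff)
qed

lemma cosh_quad: "1 + x\<^sup>2 / 2 \<le> cosh (x::real)"
proof -
  let ?f = "\<lambda>n. if even n then x ^ n /\<^sub>R fact n else 0"
  have s: "?f sums cosh x" by (rule cosh_converges)
  have "sum ?f {..<3} \<le> suminf ?f"
    using s by (intro sum_le_suminf) (auto simp: sums_iff zero_le_even_power)
  moreover have "sum ?f {..<3} = 1 + x\<^sup>2 / 2"
    by (simp add: eval_nat_numeral)
  ultimately show ?thesis using s by (simp add: sums_iff)
qed

lemma exp_pm_ge: "2 + y\<^sup>2 \<le> exp y + exp (- (y::real))"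
proof -
  have "1 + y\<^sup>2 / 2 \<le> (exp y + exp (- y)) / 2" using cosh_quad[of y] by (simp add: cosh_field_def)
  then show ?thesis by (simp add: divide_simps)
qed

lemma reflect_integrable:
  fixes F :: "'a::euclidean_space \<Rightarrow> real" and c :: 'a
  assumes [measurable]: "F \<in> borel_measurable borel"
  shows "integrable lborel (\<lambda>z. F (c - z)) \<longleftrightarrow> integrable lborel F"
    and "integral\<^sup>L lborel (\<lambda>z. F (c - z)) = integral\<^sup>L lborel F"
proof -
  have D: "distr lborel borel (\<lambda>z. c - z) = (lborel :: 'a measure)"
  proof -
    have "(lborel :: 'a measure) = density (distr lborel borel (\<lambda>x. c + (-1) *\<^sub>R x)) (\<lambda>_. \<bar>-1::real\<bar>^DIM('a))"
      by (rule lborel_affine) simp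
    then show ?thesis by (simp add: density_1)
  qed
  have m: "(\<lambda>z. c - z) \<in> measurable (lborel::'a measure) borel" by measurable
  show "integrable lborel (\<lambda>z. F (c - z)) \<longleftrightarrow> integrable lborel F"
    using integrable_distr_eq[OF m, of F] D by simp
  show "integral\<^sup>L lborel (\<lambda>z. F (c - z)) = integral\<^sup>L lborel F"
    using integral_distr[OF m, of F] D by simp
qed

lemma shift_integrable:
  fixes F :: "'a::euclidean_space \<Rightarrow> real" and c :: 'a
  assumes [measurable]: "F \<in> borel_measurable borel"
  shows "integrable lborel (\<lambda>z. F (c + z)) \<longleftrightarrow> integrable lborel F"
    and "integral\<^sup>L lborel (\<lambda>z. F (c + z)) = integral\<^sup>L lborel F"
proof -
  have D: "distr lborel borel ((+) c) = (lborel :: 'a measure)" by (rule lborel_distr_plus)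
  have m: "((+) c) \<in> measurable (lborel::'a measure) borel" by measurable
  show "integrable lborel (\<lambda>z. F (c + z)) \<longleftrightarrow> integrable lborel F"
    using integrable_distr_eq[OF m, of F] D by simp
  show "integral\<^sup>L lborel (\<lambda>z. F (c + z)) = integral\<^sup>L lborel F"
    using integral_distr[OF m, of F] D by simp
qed

lemma proposal_shift: "rwm_proposal h \<mu> z = rwm_proposal h 0 (z - \<mu>)"
  by (simp add: rwm_proposal_def)

lemma gauss:
  assumes h: "0 < h"
  shows "has_bochner_integral lborel (rwm_proposal h (\<mu>::'a::euclidean_space)) 1"
proof -
  have e: "rwm_proposal h \<mu> = (\<lambda>z. rwm_proposal h 0 (- \<mu> + z))"
    by (rule ext) (simp add: rwm_proposal_def)
  show ?thesis
    using gauss0[OF h, where 'a='a] shift_integrable[of "rwm_proposal h 0" "-\<mu>"]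
    unfolding e by (simp add: has_bochner_integral_iff)
qed

lemma norm_diff_scale_sq: "(norm (a - c *\<^sub>R v))\<^sup>2 = (norm a)\<^sup>2 - 2 * c * (a \<bullet> v) + c\<^sup>2 * (norm v)\<^sup>2"
  by (simp only: power2_norm_eq_inner) (simp add: inner_diff_left inner_diff_right inner_commute power2_eq_square algebra_simps)

lemma mgf_identity:
  assumes h: "0 < h"
  shows "rwm_proposal h \<mu> z * exp (t * ((z - \<mu>) \<bullet> v)) =
    rwm_proposal h (\<mu> + (t * h\<^sup>2) *\<^sub>R v) z * exp (t\<^sup>2 * h\<^sup>2 * (norm v)\<^sup>2 / 2)"
proof -
  have zz: "z - (\<mu> + (t * h\<^sup>2) *\<^sub>R v) = (z - \<mu>) - (t * h\<^sup>2) *\<^sub>R v" by (simp add: algebra_simps)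
  have n: "(norm (z - (\<mu> + (t * h\<^sup>2) *\<^sub>R v)))\<^sup>2 =
     (norm (z - \<mu>))\<^sup>2 - 2 * (t * h\<^sup>2) * ((z - \<mu>) \<bullet> v) + (t * h\<^sup>2)\<^sup>2 * (norm v)\<^sup>2"
    unfolding zz by (rule norm_diff_scale_sq)
  have E: "- (norm (z - (\<mu> + (t * h\<^sup>2) *\<^sub>R v)))\<^sup>2 / (2 * h\<^sup>2) + t\<^sup>2 * h\<^sup>2 * (norm v)\<^sup>2 / 2
      = - (norm (z - \<mu>))\<^sup>2 / (2 * h\<^sup>2) + t * ((z - \<mu>) \<bullet> v)"
  proof -
    have "h\<^sup>2 > 0" using h by simp
    have "- ((norm (z - \<mu>))\<^sup>2 - 2 * (t * h\<^sup>2) * ((z - \<mu>) \<bullet> v) + (t * h\<^sup>2)\<^sup>2 * (norm v)\<^sup>2) / (2 * h\<^sup>2)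
       = - (norm (z - \<mu>))\<^sup>2 / (2 * h\<^sup>2) + t * ((z - \<mu>) \<bullet> v) - t\<^sup>2 * h\<^sup>2 * (norm v)\<^sup>2 / 2"
      using h by (simp add: field_simps power2_eq_square)
    then show ?thesis unfolding n by simp
  qed
  have "exp (- (norm (z - \<mu>))\<^sup>2 / (2 * h\<^sup>2)) * exp (t * ((z - \<mu>) \<bullet> v)) =
        exp (- (norm (z - (\<mu> + (t * h\<^sup>2) *\<^sub>R v)))\<^sup>2 / (2 * h\<^sup>2)) * exp (t\<^sup>2 * h\<^sup>2 * (norm v)\<^sup>2 / 2)"
    by (simp only: exp_add[symmetric] E)
  then show ?thesis
    unfolding rwm_proposal_def by (simp only: mult.assoc)
qed

lemma prop_nonneg: "0 \<le> rwm_proposal h \<mu> z"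
  by (simp add: rwm_proposal_def)

lemma mgf:
  assumes h: "0 < h"
  shows "has_bochner_integral lborel (\<lambda>z. rwm_proposal h \<mu> z * exp (t * ((z - \<mu>) \<bullet> v)))
           (exp (t\<^sup>2 * h\<^sup>2 * (norm v)\<^sup>2 / 2))"
proof -
  have "has_bochner_integral lborel (\<lambda>z. rwm_proposal h (\<mu> + (t * h\<^sup>2) *\<^sub>R v) z * exp (t\<^sup>2 * h\<^sup>2 * (norm v)\<^sup>2 / 2))
          (1 * exp (t\<^sup>2 * h\<^sup>2 * (norm v)\<^sup>2 / 2))"
    by (rule has_bochner_integral_mult_left[OF gauss[OF h]])
  then show ?thesis by (simp add: mgf_identity[OF h])
qed

lemma mgf_int:
  assumes h: "0 < h"
  shows "integrable lborel (\<lambda>z. rwm_proposal h \<mu> z * exp (t * ((z - \<mu>) \<bullet> v)))"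
    and "integral\<^sup>L lborel (\<lambda>z. rwm_proposal h \<mu> z * exp (t * ((z - \<mu>) \<bullet> v))) = exp (t\<^sup>2 * h\<^sup>2 * (norm v)\<^sup>2 / 2)"
  using mgf[OF h, of \<mu> t v] by (auto simp: has_bochner_integral_iff)

lemma mom2_integrable:
  assumes h: "0 < h"
  shows "integrable lborel (\<lambda>z. rwm_proposal h \<mu> z * ((z - \<mu>) \<bullet> v)\<^sup>2)"
proof (rule Bochner_Integration.integrable_bound)
  show "integrable lborel (\<lambda>z. rwm_proposal h \<mu> z * exp (1 * ((z - \<mu>) \<bullet> v)) + rwm_proposal h \<mu> z * exp ((-1) * ((z - \<mu>) \<bullet> v)))"
    by (intro Bochner_Integration.integrable_add mgf_int(1)[OF h])
  show "(\<lambda>z. rwm_proposal h \<mu> z * ((z - \<mu>) \<bullet> v)\<^sup>2) \<in> borel_measurable lborel" by measurable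
  show "AE z in lborel. norm (rwm_proposal h \<mu> z * ((z - \<mu>) \<bullet> v)\<^sup>2) \<le>
      norm (rwm_proposal h \<mu> z * exp (1 * ((z - \<mu>) \<bullet> v)) + rwm_proposal h \<mu> z * exp ((-1) * ((z - \<mu>) \<bullet> v)))"
  proof (intro AE_I2)
    fix z
    let ?Y = "(z - \<mu>) \<bullet> v"
    have "?Y\<^sup>2 \<le> exp ?Y + exp (- ?Y)" using exp_pm_ge[of ?Y] by linarith
    then have "rwm_proposal h \<mu> z * ?Y\<^sup>2 \<le> rwm_proposal h \<mu> z * (exp ?Y + exp (- ?Y))"
      by (intro mult_left_mono prop_nonneg)
    then show "norm (rwm_proposal h \<mu> z * ?Y\<^sup>2) \<le> norm (rwm_proposal h \<mu> z * exp (1 * ?Y) + rwm_proposal h \<mu> z * exp ((-1) * ?Y))"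
      using prop_nonneg[of h \<mu> z] by (simp add: distrib_left)
  qed
qed

lemma mom1_integrable:
  assumes h: "0 < h"
  shows "integrable lborel (\<lambda>z. rwm_proposal h \<mu> z * ((z - \<mu>) \<bullet> v))"
proof (rule Bochner_Integration.integrable_bound)
  show "integrable lborel (\<lambda>z. rwm_proposal h \<mu> z * exp (1 * ((z - \<mu>) \<bullet> v)) + rwm_proposal h \<mu> z * exp ((-1) * ((z - \<mu>) \<bullet> v)))"
    by (intro Bochner_Integration.integrable_add mgf_int(1)[OF h])
  show "(\<lambda>z. rwm_proposal h \<mu> z * ((z - \<mu>) \<bullet> v)) \<in> borel_measurable lborel" by measurable
  show "AE z in lborel. norm (rwm_proposal h \<mu> z * ((z - \<mu>) \<bullet> v)) \<le>
      norm (rwm_proposal h \<mu> z * exp (1 * ((z - \<mu>) \<bullet> v)) + rwm_proposal h \<mu> z * exp ((-1) * ((z - \<mu>) \<bullet> v)))"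
  proof (intro AE_I2)
    fix z
    let ?Y = "(z - \<mu>) \<bullet> v"
    have "\<bar>?Y\<bar> \<le> 2 + ?Y\<^sup>2"
    proof (cases "\<bar>?Y\<bar> \<le> 1")
      case True then show ?thesis by (simp add: zero_le_power2 add_increasing2)
    next
      case False then have "\<bar>?Y\<bar> * 1 \<le> \<bar>?Y\<bar> * \<bar>?Y\<bar>" by (intro mult_left_mono) auto
      then show ?thesis by (simp add: power2_eq_square abs_mult_self)
    qed
    then have "\<bar>?Y\<bar> \<le> exp ?Y + exp (- ?Y)" using exp_pm_ge[of ?Y] by linarith
    then have "rwm_proposal h \<mu> z * \<bar>?Y\<bar> \<le> rwm_proposal h \<mu> z * (exp ?Y + exp (- ?Y))"
      by (intro mult_left_mono prop_nonneg)
    then show "norm (rwm_proposal h \<mu> z * ?Y) \<le> norm (rwm_proposal h \<mu> z * exp (1 * ?Y) + rwm_proposal h \<mu> z * exp ((-1) * ?Y))"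
      using prop_nonneg[of h \<mu> z] by (simp add: distrib_left abs_mult)
  qed
qed

lemma mom1:
  assumes h: "0 < h"
  shows "integral\<^sup>L lborel (\<lambda>z. rwm_proposal h \<mu> z * ((z - \<mu>) \<bullet> v)) = 0"
proof -
  let ?F = "\<lambda>z. rwm_proposal h \<mu> z * ((z - \<mu>) \<bullet> v)"
  have m: "?F \<in> borel_measurable borel" by measurable
  have "(\<lambda>z. ?F ((2 *\<^sub>R \<mu>) - z)) = (\<lambda>z. - ?F z)"
  proof
    fix z
    have a: "2 *\<^sub>R \<mu> - z - \<mu> = - (z - \<mu>)" by (simp add: algebra_simps scaleR_2)
    have "rwm_proposal h \<mu> (2 *\<^sub>R \<mu> - z) = rwm_proposal h \<mu> z"
      unfolding rwm_proposal_def a norm_minus_cancel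
      by (simp add: norm_minus_commute)
    moreover have "(\<mu> - z) \<bullet> v = - ((z - \<mu>) \<bullet> v)" by (simp add: inner_diff_left)
    ultimately show "?F ((2 *\<^sub>R \<mu>) - z) = - ?F z" unfolding a by simp
  qed
  then have "integral\<^sup>L lborel (\<lambda>z. - ?F z) = integral\<^sup>L lborel ?F"
    using reflect_integrable(2)[OF m, of "2 *\<^sub>R \<mu>"] by simp
  then show ?thesis by simp
qed

lemma exp_minus_one_le: "exp a - 1 \<le> a * exp (a::real)"
proof -
  have "1 - a \<le> exp (- a)" using exp_ge_add_one_self[of "-a"] by simp
  then have "(1 - a) * exp a \<le> exp (- a) * exp a" by (intro mult_right_mono) auto
  then show ?thesis by (simp add: exp_minus field_simps)
qed

lemma mom2:
  assumes h: "0 < h"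
  shows "integral\<^sup>L lborel (\<lambda>z. rwm_proposal h \<mu> z * ((z - \<mu>) \<bullet> v)\<^sup>2) \<le> h\<^sup>2 * (norm v)\<^sup>2"
proof -
  define I where "I = integral\<^sup>L lborel (\<lambda>z. rwm_proposal h \<mu> z * ((z - \<mu>) \<bullet> v)\<^sup>2)"
  define c where "c = h\<^sup>2 * (norm v)\<^sup>2 / 2"
  have c0: "0 \<le> c" unfolding c_def by simp
  have key: "I \<le> 2 * c * exp (s\<^sup>2 * c)" if s: "0 < s" for s
  proof -
    let ?g = "rwm_proposal h \<mu>"
    let ?Y = "\<lambda>z. (z - \<mu>) \<bullet> v"
    have i1: "integrable lborel (\<lambda>z. ?g z + (s\<^sup>2 / 2) * (?g z * (?Y z)\<^sup>2))"
      using gauss[OF h, of \<mu>] mom2_integrable[OF h, of \<mu> v]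
      by (intro Bochner_Integration.integrable_add integrable_mult_right) (simp_all add: has_bochner_integral_iff)
    have i2: "integrable lborel (\<lambda>z. (?g z * exp (s * ?Y z) + ?g z * exp ((-s) * ?Y z)) / 2)"
      by (intro integrable_divide Bochner_Integration.integrable_add mgf_int(1)[OF h])
    have pw: "?g z + (s\<^sup>2 / 2) * (?g z * (?Y z)\<^sup>2) \<le> (?g z * exp (s * ?Y z) + ?g z * exp ((-s) * ?Y z)) / 2" for z
    proof -
      have "2 + (s * ?Y z)\<^sup>2 \<le> exp (s * ?Y z) + exp (- (s * ?Y z))" by (rule exp_pm_ge)
      then have P: "?g z * (2 + (s * ?Y z)\<^sup>2) \<le> ?g z * (exp (s * ?Y z) + exp (- (s * ?Y z)))"
        by (intro mult_left_mono prop_nonneg)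
      have q1: "(s * ?Y z)\<^sup>2 = s\<^sup>2 * (?Y z)\<^sup>2" by (simp add: power_mult_distrib)
      have q2: "exp (- (s * ?Y z)) = exp ((-s) * ?Y z)" by simp
      from P have A: "?g z * (2 + s\<^sup>2 * (?Y z)\<^sup>2) \<le> ?g z * exp (s * ?Y z) + ?g z * exp ((-s) * ?Y z)"
        unfolding q1 q2 distrib_left .
      have "?g z + (s\<^sup>2 / 2) * (?g z * (?Y z)\<^sup>2) = (?g z * (2 + s\<^sup>2 * (?Y z)\<^sup>2)) / 2"
        by (simp add: algebra_simps)
      with A show ?thesis by (simp add: divide_right_mono)
    qed
    have "integral\<^sup>L lborel (\<lambda>z. ?g z + (s\<^sup>2 / 2) * (?g z * (?Y z)\<^sup>2)) \<le>
          integral\<^sup>L lborel (\<lambda>z. (?g z * exp (s * ?Y z) + ?g z * exp ((-s) * ?Y z)) / 2)"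
      by (rule integral_mono[OF i1 i2 pw])
    moreover have "integral\<^sup>L lborel (\<lambda>z. ?g z + (s\<^sup>2 / 2) * (?g z * (?Y z)\<^sup>2)) = 1 + (s\<^sup>2 / 2) * I"
      using gauss[OF h, of \<mu>] mom2_integrable[OF h, of \<mu> v] unfolding I_def
      by (subst Bochner_Integration.integral_add) (simp_all add: has_bochner_integral_iff)
    moreover have "integral\<^sup>L lborel (\<lambda>z. (?g z * exp (s * ?Y z) + ?g z * exp ((-s) * ?Y z)) / 2) = exp (s\<^sup>2 * c)"
      using mgf_int[OF h, of \<mu> s v] mgf_int[OF h, of \<mu> "-s" v] unfolding c_def
      by (simp add: Bochner_Integration.integral_add)
    ultimately have "1 + (s\<^sup>2 / 2) * I \<le> exp (s\<^sup>2 * c)" by (simp only:)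
    moreover have "exp (s\<^sup>2 * c) - 1 \<le> s\<^sup>2 * c * exp (s\<^sup>2 * c)" by (rule exp_minus_one_le)
    ultimately have "(s\<^sup>2 / 2) * I \<le> (s\<^sup>2 / 2) * (2 * c * exp (s\<^sup>2 * c))" by linarith
    moreover have "0 < s\<^sup>2 / 2" using s by simp
    ultimately show ?thesis by (rule mult_left_le_imp_le)
  qed
  have lim: "((\<lambda>s. 2 * c * exp (s\<^sup>2 * c)) \<longlongrightarrow> 2 * c * exp (0\<^sup>2 * c)) (at_right 0)"
    by (intro tendsto_intros)
  have ev: "eventually (\<lambda>s. I \<le> 2 * c * exp (s\<^sup>2 * c)) (at_right (0::real))"
    using eventually_at_right_less[of "0::real"] by (rule eventually_mono) (rule key)
  have "I \<le> 2 * c * exp (0\<^sup>2 * c)"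
    by (rule tendsto_le[OF _ lim tendsto_const ev]) simp
  then show ?thesis unfolding I_def c_def by simp
qed

lemma momn:
  assumes h: "0 < h"
  shows "integrable lborel (\<lambda>z. rwm_proposal h \<mu> z * (norm (z - (\<mu>::'a::euclidean_space)))\<^sup>2)"
    and "integral\<^sup>L lborel (\<lambda>z. rwm_proposal h \<mu> z * (norm (z - \<mu>))\<^sup>2) \<le> real DIM('a) * h\<^sup>2"
proof -
  have e: "(\<lambda>z. rwm_proposal h \<mu> z * (norm (z - \<mu>))\<^sup>2) = (\<lambda>z. \<Sum>b\<in>Basis. rwm_proposal h \<mu> z * ((z - \<mu>) \<bullet> b)\<^sup>2)"
    by (simp add: norm_sq_basis sum_distrib_left)
  show "integrable lborel (\<lambda>z. rwm_proposal h \<mu> z * (norm (z - \<mu>))\<^sup>2)"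
    unfolding e by (intro Bochner_Integration.integrable_sum mom2_integrable[OF h])
  have "integral\<^sup>L lborel (\<lambda>z. rwm_proposal h \<mu> z * (norm (z - \<mu>))\<^sup>2)
      = (\<Sum>b\<in>Basis. integral\<^sup>L lborel (\<lambda>z. rwm_proposal h \<mu> z * ((z - \<mu>) \<bullet> b)\<^sup>2))"
    unfolding e by (intro Bochner_Integration.integral_sum mom2_integrable[OF h])
  also have "\<dots> \<le> (\<Sum>b\<in>(Basis::'a set). h\<^sup>2)"
    by (intro sum_mono order_trans[OF mom2[OF h]]) simp
  finally show "integral\<^sup>L lborel (\<lambda>z. rwm_proposal h \<mu> z * (norm (z - \<mu>))\<^sup>2) \<le> real DIM('a) * h\<^sup>2"
    by simp
qed

lemma taylor_lower:
  fixes f :: "'a::euclidean_space \<Rightarrow> real" and gradf :: "'a \<Rightarrow> 'a"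
  assumes f_grad: "\<And>z. (f has_derivative (\<lambda>v. gradf z \<bullet> v)) (at z)"
    and f_smooth: "\<And>z w. norm (gradf z - gradf w) \<le> M * norm (z - w)"
  shows "f m + gradf m \<bullet> (z - m) - M / 2 * (norm (z - m))\<^sup>2 \<le> f z"
proof -
  define u where "u = z - m"
  define \<psi> where "\<psi> = (\<lambda>t. f (m + t *\<^sub>R u) - t * (gradf m \<bullet> u) + M / 2 * t\<^sup>2 * (norm u)\<^sup>2)"
  have D: "(\<psi> has_real_derivative (gradf (m + t *\<^sub>R u) \<bullet> u - gradf m \<bullet> u + M * t * (norm u)\<^sup>2)) (at t)" for t
  proof -
    have l: "((\<lambda>t. m + t *\<^sub>R u) has_derivative (\<lambda>s. s *\<^sub>R u)) (at t)"
      by (auto intro!: derivative_eq_intros)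
    have c: "((\<lambda>t. f (m + t *\<^sub>R u)) has_derivative (\<lambda>s. gradf (m + t *\<^sub>R u) \<bullet> (s *\<^sub>R u))) (at t)"
      by (rule has_derivative_compose[OF l f_grad])
    have c': "((\<lambda>t. f (m + t *\<^sub>R u)) has_real_derivative (gradf (m + t *\<^sub>R u) \<bullet> u)) (at t)"
      by (rule has_derivative_imp_has_field_derivative[OF c]) simp
    show ?thesis unfolding \<psi>_def
      by (auto intro!: derivative_eq_intros c')
  qed
  have nn: "0 \<le> gradf (m + t *\<^sub>R u) \<bullet> u - gradf m \<bullet> u + M * t * (norm u)\<^sup>2" if "0 \<le> t" for t
  proof -
    have "\<bar>(gradf (m + t *\<^sub>R u) - gradf m) \<bullet> u\<bar> \<le> norm (gradf (m + t *\<^sub>R u) - gradf m) * norm u"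
      by (rule Cauchy_Schwarz_ineq2)
    also have "\<dots> \<le> (M * norm (t *\<^sub>R u)) * norm u"
      using f_smooth[of "m + t *\<^sub>R u" m] by (intro mult_right_mono) auto
    also have "\<dots> = M * t * (norm u)\<^sup>2" using that by (simp add: power2_eq_square)
    finally show ?thesis by (simp add: inner_diff_left)
  qed
  have "\<psi> 0 \<le> \<psi> 1"
    by (rule DERIV_nonneg_imp_nondecreasing[of 0 1]) (use D nn in auto)
  then show ?thesis unfolding \<psi>_def u_def by simp
qed

lemma taylor_upper:
  fixes f :: "'a::euclidean_space \<Rightarrow> real" and gradf :: "'a \<Rightarrow> 'a"
  assumes f_grad: "\<And>z. (f has_derivative (\<lambda>v. gradf z \<bullet> v)) (at z)"
    and f_smooth: "\<And>z w. norm (gradf z - gradf w) \<le> M * norm (z - w)"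
  shows "f z \<le> f m + gradf m \<bullet> (z - m) + M / 2 * (norm (z - m))\<^sup>2"
proof -
  have g: "((\<lambda>x. - f x) has_derivative (\<lambda>v. (- gradf z) \<bullet> v)) (at z)" for z
    using has_derivative_minus[OF f_grad[of z]] by simp
  have s: "norm ((- gradf z) - (- gradf w)) \<le> M * norm (z - w)" for z w
    using f_smooth[of z w] by (simp add: norm_minus_commute[of "gradf z"] algebra_simps)
  have "- f m + (- gradf m) \<bullet> (z - m) - M / 2 * (norm (z - m))\<^sup>2 \<le> - f z"
    by (rule taylor_lower[where f="\<lambda>x. - f x" and gradf="\<lambda>x. - gradf x", OF g s])
  then show ?thesis by simp
qed

lemma numeric_main:
  fixes K lam \<rho> \<omega> \<eta> d sd C :: real
  assumes K0: "0 \<le> K" and l0: "0 \<le> lam" and r0: "0 \<le> \<rho>" and w0: "0 \<le> \<omega>" and e0: "0 \<le> \<eta>"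
    and d1: "1 \<le> d" and sd1: "1 \<le> sd"
    and Kd: "K * d \<le> 1 / 4" and ls: "lam * sd \<le> 1 / 16" and r8: "\<rho> \<le> 1 / 8"
    and wr: "\<omega> \<le> 2 * \<rho>" and er: "\<eta> \<le> \<omega> * \<rho>"
    and C_def: "C = K * \<omega>\<^sup>2 / 2 + lam * \<omega> + \<eta> + \<omega>\<^sup>2 / 2"
  shows "\<rho>\<^sup>2 / 2 + K * \<rho>\<^sup>2 / 2 + lam * sd / 2 + lam * \<rho> + 1 / 16 + C / 2 + C\<^sup>2 * (3 / 4) + 1 / 12
         + (K * d / 2 + lam * sd / 2) + 4 * \<rho>\<^sup>2 + (K + 1)\<^sup>2 * \<omega>\<^sup>2 * (3 / 4) \<le> 27 / 50"
proof -
  have "K * 1 \<le> K * d" using d1 K0 by (rule mult_left_mono)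
  then have K4: "K \<le> 1 / 4" using Kd by linarith
  have "lam * 1 \<le> lam * sd" using sd1 l0 by (rule mult_left_mono)
  then have l16: "lam \<le> 1 / 16" using ls by linarith
  have w4: "\<omega> \<le> 1 / 4" using wr r8 by linarith
  have rr: "\<rho>\<^sup>2 \<le> 1 / 64"
  proof -
    have "\<rho>\<^sup>2 \<le> (1/8)\<^sup>2" using r0 r8 by (intro power_mono) auto
    then show ?thesis by (simp add: power_divide)
  qed
  have ww: "\<omega>\<^sup>2 \<le> 1 / 16"
  proof -
    have "\<omega>\<^sup>2 \<le> (1/4)\<^sup>2" using w0 w4 by (intro power_mono) auto
    then show ?thesis by (simp add: power_divide)
  qed
  have Krr: "K * \<rho>\<^sup>2 \<le> 1 / 4 * (1 / 64)" by (intro mult_mono K4 rr) (auto simp: K0 r0 w0)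
  have lr: "lam * \<rho> \<le> 1 / 16 * (1 / 8)" by (intro mult_mono l16 r8) (auto simp: l0 r0 w0)
  have Kww: "K * \<omega>\<^sup>2 \<le> 1 / 4 * (1 / 16)" by (intro mult_mono K4 ww) (auto simp: K0 r0 w0)
  have lw: "lam * \<omega> \<le> 1 / 16 * (1 / 4)" by (intro mult_mono l16 w4) (auto simp: l0 r0 w0)
  have wr2: "\<omega> * \<rho> \<le> 1 / 4 * (1 / 8)" by (intro mult_mono w4 r8) (auto simp: w0 r0)
  have C0: "0 \<le> C" unfolding C_def using K0 l0 w0 e0 by simp
  have C1: "C \<le> 11 / 128" unfolding C_def using Kww lw wr2 er ww by linarith
  have CC': "C\<^sup>2 \<le> (11 / 128)\<^sup>2" using C0 C1 by (intro power_mono) auto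
  then have CC: "C\<^sup>2 \<le> 121 / 16384" by (simp add: power_divide)
  have K1: "(K + 1)\<^sup>2 \<le> (5 / 4)\<^sup>2" using K0 K4 by (intro power_mono) auto
  have K1w': "(K + 1)\<^sup>2 * \<omega>\<^sup>2 \<le> (5 / 4)\<^sup>2 * (1 / 16)" by (intro mult_mono K1 ww) auto
  then have K1w: "(K + 1)\<^sup>2 * \<omega>\<^sup>2 \<le> 25 / 256" by (simp add: power_divide)
  show ?thesis using rr Krr ls lr C1 CC Kd K1w by linarith
qed

lemma kernel_bound:
  fixes a1 a2 mn :: "'a::euclidean_space \<Rightarrow> real"
  assumes i1: "integrable lborel a1" and i2: "integrable lborel a2" and im: "integrable lborel mn"
    and le1: "\<And>z. mn z \<le> a1 z" and le2: "\<And>z. mn z \<le> a2 z"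
    and n2: "\<And>z. 0 \<le> a2 z"
    and s1: "integral\<^sup>L lborel a1 \<le> 1" and s2: "integral\<^sup>L lborel a2 \<le> 1"
    and A: "A \<in> sets borel"
  shows "((LINT z:A|lborel. a1 z) + (1 - integral\<^sup>L lborel a1) * indicator A x)
       - ((LINT z:A|lborel. a2 z) + (1 - integral\<^sup>L lborel a2) * indicator A y)
       \<le> 1 - integral\<^sup>L lborel mn"
proof -
  have A': "A \<in> sets lborel" using A by simp
  have ia1: "integrable lborel (\<lambda>z. indicator A z *\<^sub>R a1 z)" by (rule integrable_mult_indicator[OF A' i1])
  have ia2: "integrable lborel (\<lambda>z. indicator A z *\<^sub>R a2 z)" by (rule integrable_mult_indicator[OF A' i2])
  have "(LINT z:A|lborel. a1 z) - (LINT z:A|lborel. a2 z)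
        = integral\<^sup>L lborel (\<lambda>z. indicator A z *\<^sub>R a1 z - indicator A z *\<^sub>R a2 z)"
    unfolding set_lebesgue_integral_def using ia1 ia2 by (simp add: Bochner_Integration.integral_diff)
  also have "\<dots> \<le> integral\<^sup>L lborel (\<lambda>z. a1 z - mn z)"
  proof (rule integral_mono)
    show "integrable lborel (\<lambda>z. indicator A z *\<^sub>R a1 z - indicator A z *\<^sub>R a2 z)"
      using ia1 ia2 by (rule Bochner_Integration.integrable_diff)
    show "integrable lborel (\<lambda>z. a1 z - mn z)" using i1 im by (rule Bochner_Integration.integrable_diff)
    fix z
    show "indicator A z *\<^sub>R a1 z - indicator A z *\<^sub>R a2 z \<le> a1 z - mn z"
      using le1[of z] le2[of z] by (auto simp: indicator_def)
  qed
  also have "\<dots> = integral\<^sup>L lborel a1 - integral\<^sup>L lborel mn"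
    using i1 im by (simp add: Bochner_Integration.integral_diff)
  finally have d: "(LINT z:A|lborel. a1 z) - (LINT z:A|lborel. a2 z) \<le> integral\<^sup>L lborel a1 - integral\<^sup>L lborel mn" .
  have "(1 - integral\<^sup>L lborel a1) * indicator A x \<le> 1 - integral\<^sup>L lborel a1"
    using s1 by (auto simp: indicator_def)
  moreover have "0 \<le> (1 - integral\<^sup>L lborel a2) * indicator A y"
    using s2 by (auto simp: indicator_def)
  ultimately show ?thesis using d by linarith
qed

lemma exp_bound_054: "1 / 2 < exp (- (27 / 50 :: real))"
proof -
  have a: "exp (27 / 100 :: real) \<le> 100 / 73"
  proof -
    have "1 - 27 / 100 \<le> exp (- (27 / 100 :: real))" using exp_ge_add_one_self[of "- (27/100::real)"] by simp
    then have "(73 / 100) * exp (27 / 100 :: real) \<le> exp (- (27 / 100)) * exp (27 / 100)"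
      by (intro mult_right_mono) auto
    also have "\<dots> = 1" by (simp add: exp_minus)
    finally show ?thesis by simp
  qed
  have "exp (27 / 50 :: real) = exp (27 / 100) * exp (27 / 100)" by (simp add: exp_add[symmetric])
  also have "\<dots> \<le> (100 / 73) * (100 / 73)" using a by (intro mult_mono) auto
  also have "\<dots> < 2" by simp
  finally have "exp (27 / 50 :: real) < 2" .
  then show ?thesis by (simp add: exp_minus field_simps)
qed

lemma pair_bound:
  fixes u e G w :: "'a::euclidean_space" and M L h C :: real and R F l :: "'a \<Rightarrow> real"
  assumes M0: "0 \<le> M" and L0: "0 \<le> L" and h: "0 < h"
    and w_def: "w = (if G = 0 then 0 else (2 * \<bar>G \<bullet> e\<bar> / (norm G)\<^sup>2) *\<^sub>R G)"
    and R_def: "R = (\<lambda>u. (norm e)\<^sup>2 / (2 * h\<^sup>2) + M * ((norm u)\<^sup>2 + (norm e)\<^sup>2) / 2 + L * (norm u + norm e) + \<bar>u \<bullet> e\<bar> / h\<^sup>2)"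
    and F_def: "F = (\<lambda>u. exp (- R u + min 0 (G \<bullet> u - \<bar>G \<bullet> e\<bar>)))"
    and l_def: "l = (\<lambda>u. (u \<bullet> w) / h\<^sup>2 - (norm w)\<^sup>2 / (2 * h\<^sup>2))"
    and C_def: "C = M * (norm w)\<^sup>2 / 2 + L * norm w + \<bar>w \<bullet> e\<bar> / h\<^sup>2 + (norm w)\<^sup>2 / (2 * h\<^sup>2)"
  shows "exp (- (R u + max 0 (C - (M + 1 / h\<^sup>2) * (u \<bullet> w)))) \<le> F u + exp (l u) * F (w - u)"
proof -
  define X where "X = R u + max 0 (C - (M + 1 / h\<^sup>2) * (u \<bullet> w))"
  have Gw: "G \<bullet> w = 2 * \<bar>G \<bullet> e\<bar>"
  proof (cases "G = 0")
    case True then show ?thesis by (simp add: w_def)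
  next
    case False
    then have "(norm G)\<^sup>2 \<noteq> 0" by simp
    then show ?thesis using False by (simp add: w_def power2_norm_eq_inner)
  qed
  have beta: "G \<bullet> (w - u) - \<bar>G \<bullet> e\<bar> = - (G \<bullet> u - \<bar>G \<bullet> e\<bar>)"
    using Gw by (simp add: inner_diff_right)
  have n1: "(norm (w - u))\<^sup>2 = (norm u)\<^sup>2 - 2 * (u \<bullet> w) + (norm w)\<^sup>2"
    by (simp add: power2_norm_eq_inner inner_diff_left inner_diff_right inner_commute)
  have n2: "norm (w - u) \<le> norm u + norm w" using norm_triangle_ineq4[of w u] by simp
  have n3: "\<bar>(w - u) \<bullet> e\<bar> \<le> \<bar>w \<bullet> e\<bar> + \<bar>u \<bullet> e\<bar>" by (simp add: inner_diff_left)
  have h2: "0 < h\<^sup>2" using h by simp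
  have Rwu: "R (w - u) - l u \<le> R u + (C - (M + 1 / h\<^sup>2) * (u \<bullet> w))"
  proof -
    have t1: "M * ((norm (w - u))\<^sup>2 + (norm e)\<^sup>2) / 2 = M * ((norm u)\<^sup>2 + (norm e)\<^sup>2) / 2 - M * (u \<bullet> w) + M * (norm w)\<^sup>2 / 2"
      unfolding n1 by (simp add: field_simps)
    have t2: "L * (norm (w - u) + norm e) \<le> L * (norm u + norm e) + L * norm w"
      using mult_left_mono[OF n2 L0] by (simp add: algebra_simps)
    have t3: "\<bar>(w - u) \<bullet> e\<bar> / h\<^sup>2 \<le> \<bar>u \<bullet> e\<bar> / h\<^sup>2 + \<bar>w \<bullet> e\<bar> / h\<^sup>2"
      using divide_right_mono[OF n3, of "h\<^sup>2"] h2 by (simp add: add_divide_distrib)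
    have t4: "- l u = - (u \<bullet> w) / h\<^sup>2 + (norm w)\<^sup>2 / (2 * h\<^sup>2)" by (simp add: l_def)
    have t5: "(M + 1 / h\<^sup>2) * (u \<bullet> w) = M * (u \<bullet> w) + (u \<bullet> w) / h\<^sup>2" by (simp add: algebra_simps)
    show ?thesis unfolding R_def C_def t5 using t1 t2 t3 t4 by linarith
  qed
  have X1: "R u \<le> X" unfolding X_def by simp
  have X2: "R (w - u) - l u \<le> X" unfolding X_def using Rwu by linarith
  have F0: "0 \<le> F v" for v by (simp add: F_def)
  show ?thesis
  proof (cases "0 \<le> G \<bullet> u - \<bar>G \<bullet> e\<bar>")
    case True
    then have "F u = exp (- R u)" by (simp add: F_def)
    moreover have "exp (- X) \<le> exp (- R u)" using X1 by simp
    moreover have "0 \<le> exp (l u) * F (w - u)" using F0 by simp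
    ultimately show ?thesis unfolding X_def[symmetric] by linarith
  next
    case False
    then have "F (w - u) = exp (- R (w - u))" using beta by (simp add: F_def)
    then have "exp (l u) * F (w - u) = exp (- (R (w - u) - l u))" by (simp add: exp_add[symmetric])
    moreover have "exp (- X) \<le> exp (- (R (w - u) - l u))" using X2 by simp
    moreover have "0 \<le> F u" using F0 by simp
    ultimately show ?thesis unfolding X_def[symmetric] by linarith
  qed
qed

lemma amgm2: "2 * x * y \<le> x\<^sup>2 + (y::real)\<^sup>2"
  using sum_squares_bound[of x y] by simp

lemma max_half: "\<bar>T\<bar> \<le> Q / 2 \<Longrightarrow> max 0 T \<le> T / 2 + Q / (4::real)"
  by linarith

lemma X_bound:
  fixes u e w :: "'a::euclidean_space" and M L h C sd \<tau> :: real
  assumes M0: "0 \<le> M" and L0: "0 \<le> L" and h: "0 < h" and sd: "0 < sd" and tau: "0 < \<tau>"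
  shows "((norm e)\<^sup>2 / (2 * h\<^sup>2) + M * ((norm u)\<^sup>2 + (norm e)\<^sup>2) / 2 + L * (norm u + norm e) + \<bar>u \<bullet> e\<bar> / h\<^sup>2)
          + max 0 (C - (M + 1 / h\<^sup>2) * (u \<bullet> w))
       \<le> ((norm e)\<^sup>2 / (2 * h\<^sup>2) + M * (norm e)\<^sup>2 / 2 + L * h * sd / 2 + L * norm e + 1 / 16
              + C / 2 + C\<^sup>2 / (4 * \<tau>) + \<tau> / 4)
          + (M / 2 + L / (2 * h * sd)) * (norm u)\<^sup>2 + (4 / h ^ 4) * (u \<bullet> e)\<^sup>2
          + (- ((M + 1 / h\<^sup>2) / 2) - (M + 1 / h\<^sup>2) * C / (2 * \<tau>)) * (u \<bullet> w)
          + ((M + 1 / h\<^sup>2)\<^sup>2 / (4 * \<tau>)) * (u \<bullet> w)\<^sup>2"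
proof -
  define a where "a = M + 1 / h\<^sup>2"
  define T where "T = C - a * (u \<bullet> w)"
  have b1: "norm u \<le> (norm u)\<^sup>2 / (2 * h * sd) + h * sd / 2"
  proof -
    have "2 * norm u * (h * sd) \<le> (norm u)\<^sup>2 + (h * sd)\<^sup>2" by (rule amgm2)
    then show ?thesis using h sd by (simp add: field_simps power2_eq_square)
  qed
  have b2: "\<bar>u \<bullet> e\<bar> / h\<^sup>2 \<le> (4 / h ^ 4) * (u \<bullet> e)\<^sup>2 + 1 / 16"
  proof -
    have "2 * (8 * \<bar>u \<bullet> e\<bar>) * h\<^sup>2 \<le> (8 * \<bar>u \<bullet> e\<bar>)\<^sup>2 + (h\<^sup>2)\<^sup>2" by (rule amgm2)
    then have "16 * h\<^sup>2 * \<bar>u \<bullet> e\<bar> \<le> 64 * (u \<bullet> e)\<^sup>2 + h ^ 4"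
      by (simp add: power_mult_distrib power2_abs mult.commute mult.left_commute)
    then show ?thesis using h by (simp add: field_simps power2_eq_square power4_eq_xxxx)
  qed
  have b3: "max 0 T \<le> T / 2 + (T\<^sup>2 / \<tau> + \<tau>) / 4"
  proof -
    have "2 * \<bar>T\<bar> * \<tau> \<le> T\<^sup>2 + \<tau>\<^sup>2" using amgm2[of "\<bar>T\<bar>" \<tau>] by simp
    then have "\<bar>T\<bar> \<le> (T\<^sup>2 / \<tau> + \<tau>) / 2" using tau by (simp add: field_simps power2_eq_square)
    then show ?thesis by (rule max_half)
  qed
  have Lb: "L * norm u \<le> L * ((norm u)\<^sup>2 / (2 * h * sd) + h * sd / 2)" using mult_left_mono[OF b1 L0] .
  have e1: "L * ((norm u)\<^sup>2 / (2 * h * sd) + h * sd / 2) = L / (2 * h * sd) * (norm u)\<^sup>2 + L * h * sd / 2"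
    by (simp add: field_simps)
  have e2: "T / 2 + (T\<^sup>2 / \<tau> + \<tau>) / 4 = C / 2 + C\<^sup>2 / (4 * \<tau>) + \<tau> / 4
      + (- (a / 2) - a * C / (2 * \<tau>)) * (u \<bullet> w) + (a\<^sup>2 / (4 * \<tau>)) * (u \<bullet> w)\<^sup>2"
    unfolding T_def using tau by (simp add: field_simps power2_eq_square)
  have q1: "M * ((norm u)\<^sup>2 + (norm e)\<^sup>2) / 2 = M * (norm e)\<^sup>2 / 2 + M / 2 * (norm u)\<^sup>2"
    by (simp add: algebra_simps)
  have q2: "L * (norm u + norm e) = L * norm u + L * norm e" by (simp add: algebra_simps)
  have q3: "(M / 2 + L / (2 * h * sd)) * (norm u)\<^sup>2 = M / 2 * (norm u)\<^sup>2 + L / (2 * h * sd) * (norm u)\<^sup>2"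
    by (simp add: algebra_simps)
  show ?thesis
    unfolding a_def[symmetric] T_def[symmetric] q1 q2 q3
    using b2 b3 Lb e1 e2 by linarith
qed

lemma acc_lower:
  fixes gz q r A B T :: real
  assumes g0: "0 \<le> gz" and q: "q = gz * exp A" and r: "exp B \<le> r"
    and TA: "T \<le> A" and TAB: "T \<le> A + B"
  shows "gz * exp T \<le> min 1 r * q"
proof (cases "1 \<le> r")
  case True
  then have "min 1 r * q = gz * exp A" using q by simp
  moreover have "gz * exp T \<le> gz * exp A" using TA g0 by (intro mult_left_mono) auto
  ultimately show ?thesis by simp
next
  case False
  then have "min 1 r * q = r * (gz * exp A)" using q by simp
  moreover have "gz * exp T \<le> gz * exp (A + B)" using TAB g0 by (intro mult_left_mono) auto
  moreover have "gz * exp (A + B) \<le> r * (gz * exp A)"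
  proof -
    have "exp B * (gz * exp A) \<le> r * (gz * exp A)" using r g0 by (intro mult_right_mono) auto
    then show ?thesis by (simp add: exp_add algebra_simps)
  qed
  ultimately show ?thesis by simp
qed

lemma prop_shift_ratio:
  assumes h: "0 < h"
  shows "rwm_proposal h (m + v) z = rwm_proposal h m z * exp (((z - m) \<bullet> v) / h\<^sup>2 - (norm v)\<^sup>2 / (2 * h\<^sup>2))"
proof -
  have "rwm_proposal h m z * exp ((1 / h\<^sup>2) * ((z - m) \<bullet> v)) =
      rwm_proposal h (m + ((1 / h\<^sup>2) * h\<^sup>2) *\<^sub>R v) z * exp ((1 / h\<^sup>2)\<^sup>2 * h\<^sup>2 * (norm v)\<^sup>2 / 2)"
    by (rule mgf_identity[OF h])
  moreover have "(1 / h\<^sup>2) * h\<^sup>2 = 1" using h by simp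
  moreover have "(1 / h\<^sup>2)\<^sup>2 * h\<^sup>2 * (norm v)\<^sup>2 / 2 = (norm v)\<^sup>2 / (2 * h\<^sup>2)"
    using h by (simp add: power2_eq_square field_simps)
  ultimately have "rwm_proposal h m z * exp ((1 / h\<^sup>2) * ((z - m) \<bullet> v)) =
      rwm_proposal h (m + v) z * exp ((norm v)\<^sup>2 / (2 * h\<^sup>2))" by simp
  then have "rwm_proposal h m z * exp ((1 / h\<^sup>2) * ((z - m) \<bullet> v)) * exp (- ((norm v)\<^sup>2 / (2 * h\<^sup>2))) =
      rwm_proposal h (m + v) z" by (simp add: mult.assoc exp_add[symmetric])
  then show ?thesis by (simp add: mult.assoc exp_add[symmetric])
qed

lemma prop_reflect_ratio:
  assumes h: "0 < h"
  shows "rwm_proposal h m (2 *\<^sub>R m + w - z) = rwm_proposal h m z * exp (((z - m) \<bullet> w) / h\<^sup>2 - (norm w)\<^sup>2 / (2 * h\<^sup>2))"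
proof -
  define u where "u = z - m"
  have a: "2 *\<^sub>R m + w - z - m = w - u" by (simp add: algebra_simps scaleR_2 u_def)
  have n: "(norm (w - u))\<^sup>2 = (norm u)\<^sup>2 - 2 * (u \<bullet> w) + (norm w)\<^sup>2"
    by (simp add: power2_norm_eq_inner inner_diff_left inner_diff_right inner_commute)
  have E: "- (norm (w - u))\<^sup>2 / (2 * h\<^sup>2) = - (norm u)\<^sup>2 / (2 * h\<^sup>2) + ((u \<bullet> w) / h\<^sup>2 - (norm w)\<^sup>2 / (2 * h\<^sup>2))"
    unfolding n using h by (simp add: field_simps)
  show ?thesis
    unfolding rwm_proposal_def a u_def[symmetric] E by (simp only: exp_add mult.assoc)
qed

lemma poly_int:
  fixes m e w :: "'a::euclidean_space" and h a0 a1 a2 a3 a4 :: real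
  assumes h: "0 < h" and a1: "0 \<le> a1" and a2: "0 \<le> a2" and a4: "0 \<le> a4"
  shows "integrable lborel (\<lambda>z. rwm_proposal h m z * (a0 + a1 * (norm (z - m))\<^sup>2 + a2 * ((z - m) \<bullet> e)\<^sup>2 + a3 * ((z - m) \<bullet> w) + a4 * ((z - m) \<bullet> w)\<^sup>2))"
    and "integral\<^sup>L lborel (\<lambda>z. rwm_proposal h m z * (a0 + a1 * (norm (z - m))\<^sup>2 + a2 * ((z - m) \<bullet> e)\<^sup>2 + a3 * ((z - m) \<bullet> w) + a4 * ((z - m) \<bullet> w)\<^sup>2))
       \<le> a0 + a1 * (real DIM('a) * h\<^sup>2) + a2 * (h\<^sup>2 * (norm e)\<^sup>2) + a4 * (h\<^sup>2 * (norm w)\<^sup>2)"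
proof -
  let ?g = "rwm_proposal h m"
  have eq: "(\<lambda>z. ?g z * (a0 + a1 * (norm (z - m))\<^sup>2 + a2 * ((z - m) \<bullet> e)\<^sup>2 + a3 * ((z - m) \<bullet> w) + a4 * ((z - m) \<bullet> w)\<^sup>2))
     = (\<lambda>z. a0 * ?g z + a1 * (?g z * (norm (z - m))\<^sup>2) + a2 * (?g z * ((z - m) \<bullet> e)\<^sup>2) + a3 * (?g z * ((z - m) \<bullet> w)) + a4 * (?g z * ((z - m) \<bullet> w)\<^sup>2))"
    by (rule ext) (simp add: algebra_simps)
  have i0: "integrable lborel ?g" and v0: "integral\<^sup>L lborel ?g = 1"
    using gauss[OF h, of m] by (auto simp: has_bochner_integral_iff)
  note i1 = momn(1)[OF h, of m] and v1 = momn(2)[OF h, of m]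
  note i2 = mom2_integrable[OF h, of m e] and v2 = mom2[OF h, of m e]
  note i3 = mom1_integrable[OF h, of m w] and v3 = mom1[OF h, of m w]
  note i4 = mom2_integrable[OF h, of m w] and v4 = mom2[OF h, of m w]
  show "integrable lborel (\<lambda>z. ?g z * (a0 + a1 * (norm (z - m))\<^sup>2 + a2 * ((z - m) \<bullet> e)\<^sup>2 + a3 * ((z - m) \<bullet> w) + a4 * ((z - m) \<bullet> w)\<^sup>2))"
    unfolding eq using i0 i1 i2 i3 i4 by (intro Bochner_Integration.integrable_add integrable_mult_right)
  have "integral\<^sup>L lborel (\<lambda>z. ?g z * (a0 + a1 * (norm (z - m))\<^sup>2 + a2 * ((z - m) \<bullet> e)\<^sup>2 + a3 * ((z - m) \<bullet> w) + a4 * ((z - m) \<bullet> w)\<^sup>2))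
      = a0 * integral\<^sup>L lborel ?g + a1 * integral\<^sup>L lborel (\<lambda>z. ?g z * (norm (z - m))\<^sup>2)
        + a2 * integral\<^sup>L lborel (\<lambda>z. ?g z * ((z - m) \<bullet> e)\<^sup>2) + a3 * integral\<^sup>L lborel (\<lambda>z. ?g z * ((z - m) \<bullet> w))
        + a4 * integral\<^sup>L lborel (\<lambda>z. ?g z * ((z - m) \<bullet> w)\<^sup>2)"
    unfolding eq using i0 i1 i2 i3 i4
    by (simp add: Bochner_Integration.integral_add Bochner_Integration.integrable_add)
  also have "\<dots> \<le> a0 + a1 * (real DIM('a) * h\<^sup>2) + a2 * (h\<^sup>2 * (norm e)\<^sup>2) + a4 * (h\<^sup>2 * (norm w)\<^sup>2)"
  proof -
    have "a1 * integral\<^sup>L lborel (\<lambda>z. ?g z * (norm (z - m))\<^sup>2) \<le> a1 * (real DIM('a) * h\<^sup>2)"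
      using v1 a1 by (rule mult_left_mono)
    moreover have "a2 * integral\<^sup>L lborel (\<lambda>z. ?g z * ((z - m) \<bullet> e)\<^sup>2) \<le> a2 * (h\<^sup>2 * (norm e)\<^sup>2)"
      using v2 a2 by (rule mult_left_mono)
    moreover have "a4 * integral\<^sup>L lborel (\<lambda>z. ?g z * ((z - m) \<bullet> w)\<^sup>2) \<le> a4 * (h\<^sup>2 * (norm w)\<^sup>2)"
      using v4 a4 by (rule mult_left_mono)
    ultimately show ?thesis using v0 v3 by simp
  qed
  finally show "integral\<^sup>L lborel (\<lambda>z. ?g z * (a0 + a1 * (norm (z - m))\<^sup>2 + a2 * ((z - m) \<bullet> e)\<^sup>2 + a3 * ((z - m) \<bullet> w) + a4 * ((z - m) \<bullet> w)\<^sup>2))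
       \<le> a0 + a1 * (real DIM('a) * h\<^sup>2) + a2 * (h\<^sup>2 * (norm e)\<^sup>2) + a4 * (h\<^sup>2 * (norm w)\<^sup>2)" .
qed

lemma numeric_conv:
  fixes M L h d sd ne nw we C :: real
  assumes M0: "0 \<le> M" and L0: "0 \<le> L" and h: "0 < h" and d1: "1 \<le> d" and sd1: "1 \<le> sd"
    and sdd: "sd\<^sup>2 = d" and hM: "M * h\<^sup>2 * d \<le> 1 / 4" and hL: "L * h * sd \<le> 1 / 16"
    and ne0: "0 \<le> ne" and ne8: "ne \<le> h / 8" and nw0: "0 \<le> nw" and nw2: "nw \<le> 2 * ne"
    and we0: "0 \<le> we" and we1: "we \<le> nw * ne"
    and C_def: "C = M * nw\<^sup>2 / 2 + L * nw + we / h\<^sup>2 + nw\<^sup>2 / (2 * h\<^sup>2)"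
  shows "(ne\<^sup>2 / (2 * h\<^sup>2) + M * ne\<^sup>2 / 2 + L * h * sd / 2 + L * ne + 1 / 16
              + C / 2 + C\<^sup>2 / (4 * (1 / 3)) + (1 / 3) / 4)
          + (M / 2 + L / (2 * h * sd)) * (d * h\<^sup>2) + (4 / h ^ 4) * (h\<^sup>2 * ne\<^sup>2)
          + ((M + 1 / h\<^sup>2)\<^sup>2 / (4 * (1 / 3))) * (h\<^sup>2 * nw\<^sup>2) \<le> 27 / 50"
proof -
  define K where "K = M * h\<^sup>2"
  define lam where "lam = L * h"
  define \<rho> where "\<rho> = ne / h"
  define \<omega> where "\<omega> = nw / h"
  define \<eta> where "\<eta> = we / h\<^sup>2"
  have hne: "h \<noteq> 0" using h by simp
  have ne_eq: "ne = h * \<rho>" unfolding \<rho>_def using hne by simp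
  have nw_eq: "nw = h * \<omega>" unfolding \<omega>_def using hne by simp
  have we_eq: "we = h\<^sup>2 * \<eta>" unfolding \<eta>_def using hne by simp
  have CC: "C = K * \<omega>\<^sup>2 / 2 + lam * \<omega> + \<eta> + \<omega>\<^sup>2 / 2"
    unfolding C_def K_def lam_def ne_eq nw_eq we_eq using hne by (simp add: field_simps power2_eq_square)
  have e1: "ne\<^sup>2 / (2 * h\<^sup>2) = \<rho>\<^sup>2 / 2" unfolding ne_eq using hne by (simp add: field_simps power2_eq_square)
  have e2: "M * ne\<^sup>2 / 2 = K * \<rho>\<^sup>2 / 2" unfolding ne_eq K_def by (simp add: field_simps power2_eq_square)
  have e3: "L * h * sd / 2 = lam * sd / 2" unfolding lam_def by simp
  have e4: "L * ne = lam * \<rho>" unfolding ne_eq lam_def by simp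
  have e5: "C\<^sup>2 / (4 * (1 / 3)) = C\<^sup>2 * (3 / 4)" by simp
  have e6: "(M / 2 + L / (2 * h * sd)) * (d * h\<^sup>2) = K * d / 2 + lam * sd / 2"
  proof -
    have "sd \<noteq> 0" using sd1 by simp
    then show ?thesis unfolding K_def lam_def sdd[symmetric] using hne by (simp add: field_simps power2_eq_square)
  qed
  have e7: "(4 / h ^ 4) * (h\<^sup>2 * ne\<^sup>2) = 4 * \<rho>\<^sup>2" unfolding ne_eq using hne by (simp add: field_simps power2_eq_square power4_eq_xxxx)
  have e8: "((M + 1 / h\<^sup>2)\<^sup>2 / (4 * (1 / 3))) * (h\<^sup>2 * nw\<^sup>2) = (K + 1)\<^sup>2 * \<omega>\<^sup>2 * (3 / 4)"
    unfolding nw_eq K_def using hne by (simp add: field_simps power2_eq_square)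
  have c1: "0 \<le> K" unfolding K_def using M0 by simp
  have c2: "0 \<le> lam" unfolding lam_def using L0 h by simp
  have c3: "0 \<le> \<rho>" unfolding \<rho>_def using ne0 h by simp
  have c4: "0 \<le> \<omega>" unfolding \<omega>_def using nw0 h by simp
  have c5: "0 \<le> \<eta>" unfolding \<eta>_def using we0 by simp
  have c6: "K * d \<le> 1 / 4" unfolding K_def using hM by simp
  have c7: "lam * sd \<le> 1 / 16" unfolding lam_def using hL by simp
  have c8: "\<rho> \<le> 1 / 8" unfolding \<rho>_def using ne8 h by (simp add: divide_le_eq)
  have c9: "\<omega> \<le> 2 * \<rho>" unfolding \<omega>_def \<rho>_def using nw2 h by (simp add: divide_right_mono)
  have c10: "\<eta> \<le> \<omega> * \<rho>"
  proof -
    have "we / h\<^sup>2 \<le> (nw * ne) / h\<^sup>2" using we1 by (intro divide_right_mono) auto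
    then show ?thesis unfolding \<eta>_def \<omega>_def \<rho>_def by (simp add: power2_eq_square)
  qed
  have main: "\<rho>\<^sup>2 / 2 + K * \<rho>\<^sup>2 / 2 + lam * sd / 2 + lam * \<rho> + 1 / 16 + C / 2 + C\<^sup>2 * (3 / 4) + 1 / 12
         + (K * d / 2 + lam * sd / 2) + 4 * \<rho>\<^sup>2 + (K + 1)\<^sup>2 * \<omega>\<^sup>2 * (3 / 4) \<le> 27 / 50"
    by (rule numeric_main[OF c1 c2 c3 c4 c5 d1 sd1 c6 c7 c8 c9 c10 CC])
  show ?thesis unfolding e1 e2 e3 e4 e5 e6 e7 e8 using main by simp
qed

theorem mainTheorem2:
  fixes f g :: "'a::euclidean_space \<Rightarrow> real"
    and gradf :: "'a \<Rightarrow> 'a"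
    and M L h :: real and x y :: 'a
  assumes prob: "has_bochner_integral lborel (\<lambda>z. exp (f z + g z)) 1"
    and f_grad: "\<And>z. (f has_derivative (\<lambda>v. gradf z \<bullet> v)) (at z)"
    and f_smooth: "\<And>z w. norm (gradf z - gradf w) \<le> M * norm (z - w)"
    and g_lip: "\<And>z w. \<bar>g z - g w\<bar> \<le> L * norm (z - w)"
    and h_pos: "0 < h"
    and h_M: "2 * sqrt M * sqrt (real DIM('a)) * h \<le> 1"
    and h_L: "16 * L * sqrt (real DIM('a)) * h \<le> 1"
    and xy: "norm (x - y) < h / 4"
  shows "rwm_tv (\<lambda>z. exp (f z + g z)) h x y < 3 / 4"
proof -
  note h = h_pos
  define d where "d = real DIM('a)"
  define sd where "sd = sqrt d"
  have d1: "1 \<le> d" unfolding d_def by (simp add: Suc_le_eq)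
  have sd1: "1 \<le> sd" unfolding sd_def using d1 by simp
  have sdd: "sd\<^sup>2 = d" unfolding sd_def using d1 by simp
  obtain b0 :: 'a where b0: "b0 \<in> Basis" using nonempty_Basis by blast
  have "norm (gradf b0 - gradf 0) \<le> M" using f_smooth[of b0 0] b0 by simp
  then have M0: "0 \<le> M" by (meson norm_ge_zero order_trans)
  have "\<bar>g b0 - g 0\<bar> \<le> L" using g_lip[of b0 0] b0 by simp
  then have L0: "0 \<le> L" by (meson abs_ge_zero order_trans)
  have hM: "M * h\<^sup>2 * d \<le> 1 / 4"
  proof -
    have "0 \<le> 2 * sqrt M * sd * h" using M0 h sd1 by simp
    then have "(2 * sqrt M * sd * h)\<^sup>2 \<le> 1\<^sup>2" using h_M unfolding sd_def d_def
      by (intro power_mono) auto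
    then show ?thesis using M0 sdd by (simp add: power_mult_distrib mult_ac)
  qed
  have hL: "L * h * sd \<le> 1 / 16" using h_L unfolding sd_def d_def by (simp add: mult_ac)

  define p where "p = (\<lambda>z. exp (f z + g z))"
  have fc: "continuous_on UNIV f"
    by (intro continuous_at_imp_continuous_on ballI has_derivative_continuous[OF f_grad])
  have gc: "continuous_on UNIV g"
  proof (rule lipschitz_on_continuous_on)
    show "L-lipschitz_on UNIV g"
      by (rule lipschitz_onI) (use g_lip L0 in \<open>auto simp: dist_real_def dist_norm\<close>)
  qed
  have fm[measurable]: "f \<in> borel_measurable borel" by (rule borel_measurable_continuous_onI[OF fc])
  have gm[measurable]: "g \<in> borel_measurable borel" by (rule borel_measurable_continuous_onI[OF gc])
  have pm[measurable]: "p \<in> borel_measurable borel" unfolding p_def by measurable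
  have ppos: "0 < p z" for z unfolding p_def by simp
  define m where "m = (1/2) *\<^sub>R (x + y)"
  define e where "e = (1/2) *\<^sub>R (y - x)"
  have hx: "x = m + (- e)" unfolding m_def e_def by (simp add: algebra_simps scaleR_2[symmetric] scaleR_add_left[symmetric])
  have hy: "y = m + e" unfolding m_def e_def by (simp add: algebra_simps scaleR_2[symmetric] scaleR_add_left[symmetric])
  have ne: "norm e < h / 8"
  proof -
    have "norm e = norm (x - y) / 2" unfolding e_def by (simp add: norm_minus_commute)
    then show ?thesis using xy by simp
  qed
  define G where "G = gradf m"
  define w where "w = (if G = 0 then 0 else (2 * \<bar>G \<bullet> e\<bar> / (norm G)\<^sup>2) *\<^sub>R G)"
  have nw: "norm w \<le> 2 * norm e"
  proof (cases "G = 0")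
    case True then show ?thesis by (simp add: w_def)
  next
    case False
    then have "norm w = 2 * \<bar>G \<bullet> e\<bar> / norm G" by (simp add: w_def power2_eq_square)
    also have "\<dots> \<le> 2 * (norm G * norm e) / norm G"
      using Cauchy_Schwarz_ineq2[of G e] by (intro divide_right_mono) auto
    also have "\<dots> = 2 * norm e" using False by simp
    finally show ?thesis .
  qed
  have we: "\<bar>w \<bullet> e\<bar> \<le> norm w * norm e" by (rule Cauchy_Schwarz_ineq2)
  define R where "R = (\<lambda>u. (norm e)\<^sup>2 / (2 * h\<^sup>2) + M * ((norm u)\<^sup>2 + (norm e)\<^sup>2) / 2 + L * (norm u + norm e) + \<bar>u \<bullet> e\<bar> / h\<^sup>2)"
  define F where "F = (\<lambda>u. exp (- R u + min 0 (G \<bullet> u - \<bar>G \<bullet> e\<bar>)))"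
  define l where "l = (\<lambda>u. (u \<bullet> w) / h\<^sup>2 - (norm w)\<^sup>2 / (2 * h\<^sup>2))"
  define C where "C = M * (norm w)\<^sup>2 / 2 + L * norm w + \<bar>w \<bullet> e\<bar> / h\<^sup>2 + (norm w)\<^sup>2 / (2 * h\<^sup>2)"
  define a1 where "a1 = (\<lambda>z. rwm_accept p x z * rwm_proposal h x z)"
  define a2 where "a2 = (\<lambda>z. rwm_accept p y z * rwm_proposal h y z)"
  define mn where "mn = (\<lambda>z. min (a1 z) (a2 z))"
  have Fm[measurable]: "F \<in> borel_measurable borel" unfolding F_def R_def by measurable
  have tz: "f m + G \<bullet> (z - m) - M / 2 * (norm (z - m))\<^sup>2 \<le> f z" for z
    unfolding G_def by (rule taylor_lower[OF f_grad f_smooth])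
  have tx: "f x \<le> f m - G \<bullet> e + M / 2 * (norm e)\<^sup>2"
    using taylor_upper[OF f_grad f_smooth, of x m] unfolding G_def[symmetric] by (simp add: hx)
  have ty: "f y \<le> f m + G \<bullet> e + M / 2 * (norm e)\<^sup>2"
    using taylor_upper[OF f_grad f_smooth, of y m] unfolding G_def[symmetric] by (simp add: hy)
  have P1: "rwm_proposal h m z * F (z - m) \<le> mn z" for z
  proof -
    define u where "u = z - m"
    define E where "E = M * ((norm u)\<^sup>2 + (norm e)\<^sup>2) / 2 + L * (norm u + norm e)"
    define T where "T = - R u + min 0 (G \<bullet> u - \<bar>G \<bullet> e\<bar>)"
    have E0: "0 \<le> E" unfolding E_def using M0 L0 by simp
    have eqE: "E = M / 2 * (norm u)\<^sup>2 + M / 2 * (norm e)\<^sup>2 + L * (norm u + norm e)"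
      unfolding E_def by (simp add: field_simps)
    have RE: "R u = (norm e)\<^sup>2 / (2 * h\<^sup>2) + E + \<bar>u \<bullet> e\<bar> / h\<^sup>2" unfolding R_def E_def by simp
    have s1: "(u \<bullet> e) / h\<^sup>2 \<le> \<bar>u \<bullet> e\<bar> / h\<^sup>2" by (intro divide_right_mono) auto
    have s2: "- ((u \<bullet> e) / h\<^sup>2) \<le> \<bar>u \<bullet> e\<bar> / h\<^sup>2" using divide_right_mono[of "- (u \<bullet> e)" "\<bar>u \<bullet> e\<bar>" "h\<^sup>2"] by simp
    have mn0: "min 0 (G \<bullet> u - \<bar>G \<bullet> e\<bar>) \<le> 0" "min 0 (G \<bullet> u - \<bar>G \<bullet> e\<bar>) \<le> G \<bullet> u - \<bar>G \<bullet> e\<bar>" by auto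
    have k1: "- \<bar>G \<bullet> e\<bar> \<le> G \<bullet> e" "- \<bar>G \<bullet> e\<bar> \<le> - (G \<bullet> e)" by auto
    have gl: "g z - g x' \<ge> - (L * (norm u + norm e))" if "norm (z - x') \<le> norm u + norm e" for x'
    proof -
      have "\<bar>g z - g x'\<bar> \<le> L * norm (z - x')" by (rule g_lip)
      also have "\<dots> \<le> L * (norm u + norm e)" using that L0 by (rule mult_left_mono)
      finally show ?thesis by linarith
    qed
    have zx: "norm (z - x) \<le> norm u + norm e"
    proof -
      have "z - x = u + e" unfolding u_def hx by simp
      then show ?thesis using norm_triangle_ineq[of u e] by simp
    qed
    have zy: "norm (z - y) \<le> norm u + norm e"
    proof -
      have "z - y = u - e" unfolding u_def hy by simp
      then show ?thesis using norm_triangle_ineq4[of u e] by simp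
    qed
    have tzu: "f m + G \<bullet> u - M / 2 * (norm u)\<^sup>2 \<le> f z" using tz[of z] unfolding u_def .
    have A1: "rwm_proposal h m z * exp T \<le> a1 z"
    proof -
      have q: "rwm_proposal h x z = rwm_proposal h m z * exp (- ((u \<bullet> e) / h\<^sup>2) - (norm e)\<^sup>2 / (2 * h\<^sup>2))"
        using prop_shift_ratio[OF h, of m "- e" z] unfolding hx[symmetric] u_def[symmetric] by simp
      have r: "exp (G \<bullet> u + G \<bullet> e - E) \<le> p z / p x"
      proof -
        have "G \<bullet> u + G \<bullet> e - E \<le> f z + g z - (f x + g x)"
          using tzu tx gl[OF zx] eqE by linarith
        then show ?thesis unfolding p_def by (simp add: exp_diff[symmetric])
      qed
      have "rwm_proposal h m z * exp T \<le> min 1 (p z / p x) * rwm_proposal h x z"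
      proof (rule acc_lower[OF prop_nonneg q r])
        show "T \<le> - ((u \<bullet> e) / h\<^sup>2) - (norm e)\<^sup>2 / (2 * h\<^sup>2)"
          unfolding T_def RE using E0 mn0 s1 by linarith
        show "T \<le> - ((u \<bullet> e) / h\<^sup>2) - (norm e)\<^sup>2 / (2 * h\<^sup>2) + (G \<bullet> u + G \<bullet> e - E)"
          unfolding T_def RE using E0 mn0 s1 k1 by linarith
      qed
      then show ?thesis unfolding a1_def rwm_accept_def .
    qed
    have A2: "rwm_proposal h m z * exp T \<le> a2 z"
    proof -
      have q: "rwm_proposal h y z = rwm_proposal h m z * exp ((u \<bullet> e) / h\<^sup>2 - (norm e)\<^sup>2 / (2 * h\<^sup>2))"
        using prop_shift_ratio[OF h, of m e z] unfolding hy[symmetric] u_def[symmetric] by simp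
      have r: "exp (G \<bullet> u - G \<bullet> e - E) \<le> p z / p y"
      proof -
        have "G \<bullet> u - G \<bullet> e - E \<le> f z + g z - (f y + g y)"
          using tzu ty gl[OF zy] eqE by linarith
        then show ?thesis unfolding p_def by (simp add: exp_diff[symmetric])
      qed
      have "rwm_proposal h m z * exp T \<le> min 1 (p z / p y) * rwm_proposal h y z"
      proof (rule acc_lower[OF prop_nonneg q r])
        show "T \<le> (u \<bullet> e) / h\<^sup>2 - (norm e)\<^sup>2 / (2 * h\<^sup>2)"
          unfolding T_def RE using E0 mn0 s2 by linarith
        show "T \<le> (u \<bullet> e) / h\<^sup>2 - (norm e)\<^sup>2 / (2 * h\<^sup>2) + (G \<bullet> u - G \<bullet> e - E)"
          unfolding T_def RE using E0 mn0 s2 k1 by linarith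
      qed
      then show ?thesis unfolding a2_def rwm_accept_def .
    qed
    have "F (z - m) = exp T" unfolding F_def T_def u_def by simp
    then show ?thesis using A1 A2 unfolding mn_def by simp
  qed
  have accb: "0 \<le> rwm_accept p v z \<and> rwm_accept p v z \<le> 1" for v z
    unfolding rwm_accept_def using ppos[of z] ppos[of v] by (simp add: min_def)
  have a1m[measurable]: "a1 \<in> borel_measurable lborel" unfolding a1_def rwm_accept_def by measurable
  have a2m[measurable]: "a2 \<in> borel_measurable lborel" unfolding a2_def rwm_accept_def by measurable
  have a1b: "0 \<le> a1 z \<and> a1 z \<le> rwm_proposal h x z" for z
    unfolding a1_def using accb[of x z] prop_nonneg[of h x z] by (simp add: mult_left_le_one_le)
  have a2b: "0 \<le> a2 z \<and> a2 z \<le> rwm_proposal h y z" for z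
    unfolding a2_def using accb[of y z] prop_nonneg[of h y z] by (simp add: mult_left_le_one_le)
  have gi: "integrable lborel (rwm_proposal h v)" "integral\<^sup>L lborel (rwm_proposal h v) = 1" for v :: 'a
    using gauss[OF h, of v] by (auto simp: has_bochner_integral_iff)
  have ia1: "integrable lborel a1"
  proof (rule Bochner_Integration.integrable_bound[OF gi(1)[of x] a1m], rule AE_I2)
    fix z show "norm (a1 z) \<le> norm (rwm_proposal h x z)" using a1b[of z] prop_nonneg[of h x z] by simp
  qed
  have ia2: "integrable lborel a2"
  proof (rule Bochner_Integration.integrable_bound[OF gi(1)[of y] a2m], rule AE_I2)
    fix z show "norm (a2 z) \<le> norm (rwm_proposal h y z)" using a2b[of z] prop_nonneg[of h y z] by simp
  qed
  have sa1: "integral\<^sup>L lborel a1 \<le> 1"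
    using integral_mono[OF ia1 gi(1)[of x]] a1b gi(2)[of x] by auto
  have sa2: "integral\<^sup>L lborel a2 \<le> 1"
    using integral_mono[OF ia2 gi(1)[of y]] a2b gi(2)[of y] by auto
  have mnm[measurable]: "mn \<in> borel_measurable lborel" unfolding mn_def by measurable
  have imn: "integrable lborel mn"
  proof (rule Bochner_Integration.integrable_bound[OF ia1 mnm], rule AE_I2)
    fix z show "norm (mn z) \<le> norm (a1 z)" using a1b[of z] a2b[of z] by (simp add: mn_def)
  qed
  \<comment> \<open>total variation reduces to the overlap integral\<close>
  have kx: "rwm_kernel p h x A = (LINT z:A|lborel. a1 z) + (1 - integral\<^sup>L lborel a1) * indicator A x" for A
    unfolding rwm_kernel_def a1_def by simp
  have ky: "rwm_kernel p h y A = (LINT z:A|lborel. a2 z) + (1 - integral\<^sup>L lborel a2) * indicator A y" for A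
    unfolding rwm_kernel_def a2_def by simp
  have tvA: "\<bar>rwm_kernel p h x A - rwm_kernel p h y A\<bar> \<le> 1 - integral\<^sup>L lborel mn" if A: "A \<in> sets borel" for A
  proof -
    have "rwm_kernel p h x A - rwm_kernel p h y A \<le> 1 - integral\<^sup>L lborel mn"
      unfolding kx ky
      by (rule kernel_bound[OF ia1 ia2 imn _ _ _ sa1 sa2 A]) (use a1b a2b in \<open>auto simp: mn_def\<close>)
    moreover have "rwm_kernel p h y A - rwm_kernel p h x A \<le> 1 - integral\<^sup>L lborel mn"
    proof -
      have mn': "mn = (\<lambda>z. min (a2 z) (a1 z))" unfolding mn_def by (auto simp: min.commute)
      show ?thesis
        unfolding kx ky mn'
        by (rule kernel_bound[OF ia2 ia1 imn[unfolded mn'] _ _ _ sa2 sa1 A]) (use a1b a2b in auto)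
    qed
    ultimately show ?thesis by linarith
  qed
  have tv: "rwm_tv p h x y \<le> 1 - integral\<^sup>L lborel mn"
    unfolding rwm_tv_def
    by (rule cSUP_least) (use tvA in \<open>auto intro: sets.empty_sets\<close>)
  define H where "H = (\<lambda>z. rwm_proposal h m z * F (z - m))"
  have Hm[measurable]: "H \<in> borel_measurable borel" unfolding H_def by measurable
  have F01: "0 \<le> F v \<and> F v \<le> 1" for v
  proof -
    have "0 \<le> R v" unfolding R_def using M0 L0 by simp
    then have "- R v + min 0 (G \<bullet> v - \<bar>G \<bullet> e\<bar>) \<le> 0" by simp
    then show ?thesis unfolding F_def by simp
  qed
  have Hb: "0 \<le> H z \<and> H z \<le> rwm_proposal h m z" for z
    unfolding H_def using F01[of "z - m"] prop_nonneg[of h m z] by (auto intro: mult_right_le_one_le)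
  have iH: "integrable lborel H"
  proof (rule Bochner_Integration.integrable_bound[OF gi(1)[of m]], measurable, rule AE_I2)
    fix z show "norm (H z) \<le> norm (rwm_proposal h m z)" using Hb[of z] by simp
  qed
  have JH: "integral\<^sup>L lborel H \<le> integral\<^sup>L lborel mn"
    by (rule integral_mono[OF iH imn]) (use P1 in \<open>simp add: H_def\<close>)
  define c where "c = 2 *\<^sub>R m + w"
  have iHc: "integrable lborel (\<lambda>z. H (c - z))" using reflect_integrable(1)[OF Hm, of c] iH by simp
  have vHc: "integral\<^sup>L lborel (\<lambda>z. H (c - z)) = integral\<^sup>L lborel H" by (rule reflect_integrable(2)[OF Hm])
  define k0 where "k0 = (norm e)\<^sup>2 / (2 * h\<^sup>2) + M * (norm e)\<^sup>2 / 2 + L * h * sd / 2 + L * norm e + 1 / 16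
              + C / 2 + C\<^sup>2 / (4 * (1 / 3)) + (1 / 3) / 4"
  define k1 where "k1 = M / 2 + L / (2 * h * sd)"
  define k2 where "k2 = 4 / h ^ 4"
  define k3 where "k3 = - ((M + 1 / h\<^sup>2) / 2) - (M + 1 / h\<^sup>2) * C / (2 * (1 / 3))"
  define k4 where "k4 = (M + 1 / h\<^sup>2)\<^sup>2 / (4 * (1 / 3))"
  define Xp where "Xp = (\<lambda>u. k0 + k1 * (norm u)\<^sup>2 + k2 * (u \<bullet> e)\<^sup>2 + k3 * (u \<bullet> w) + k4 * (u \<bullet> w)\<^sup>2)"
  define m0 :: real where "m0 = 27 / 50"
  have k1p: "0 \<le> k1" unfolding k1_def using M0 L0 h sd1 by simp
  have k2p: "0 \<le> k2" unfolding k2_def by simp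
  have k4p: "0 \<le> k4" unfolding k4_def by simp
  have iP: "integrable lborel (\<lambda>z. rwm_proposal h m z * Xp (z - m))"
    unfolding Xp_def by (rule poly_int(1)[OF h k1p k2p k4p])
  have vP: "integral\<^sup>L lborel (\<lambda>z. rwm_proposal h m z * Xp (z - m)) \<le> m0"
  proof -
    have "integral\<^sup>L lborel (\<lambda>z. rwm_proposal h m z * Xp (z - m))
        \<le> k0 + k1 * (real DIM('a) * h\<^sup>2) + k2 * (h\<^sup>2 * (norm e)\<^sup>2) + k4 * (h\<^sup>2 * (norm w)\<^sup>2)"
      unfolding Xp_def by (rule poly_int(2)[OF h k1p k2p k4p])
    also have "\<dots> \<le> m0"
      unfolding k0_def k1_def k2_def k4_def m0_def d_def[symmetric]
      by (rule numeric_conv[OF M0 L0 h d1 sd1 sdd hM hL norm_ge_zero _ norm_ge_zero nw abs_ge_zero we C_def])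
         (use ne in simp)
    finally show ?thesis .
  qed
  have pw: "exp (- m0) * (1 + m0) * rwm_proposal h m z - exp (- m0) * (rwm_proposal h m z * Xp (z - m))
            \<le> H z + H (c - z)" for z
  proof -
    define u where "u = z - m"
    have cz: "c - z - m = w - u" unfolding c_def u_def by (simp add: algebra_simps scaleR_2)
    have Hc: "H (c - z) = rwm_proposal h m z * (exp (l u) * F (w - u))"
    proof -
      have "rwm_proposal h m (c - z) = rwm_proposal h m z * exp (l u)"
        unfolding c_def l_def u_def by (rule prop_reflect_ratio[OF h])
      then show ?thesis unfolding H_def cz by simp
    qed
    have pb: "exp (- (R u + max 0 (C - (M + 1 / h\<^sup>2) * (u \<bullet> w)))) \<le> F u + exp (l u) * F (w - u)"
      by (rule pair_bound[OF M0 L0 h w_def R_def F_def l_def C_def])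
    have sdp: "0 < sd" using sd1 by simp
    have xb: "R u + max 0 (C - (M + 1 / h\<^sup>2) * (u \<bullet> w)) \<le> Xp u"
      unfolding R_def Xp_def k0_def k1_def k2_def k3_def k4_def
      by (rule X_bound[OF M0 L0 h sdp]) simp
    have "1 + m0 - Xp u \<le> exp (m0 - Xp u)" using exp_ge_add_one_self[of "m0 - Xp u"] by linarith
    then have "exp (- m0) * (1 + m0 - Xp u) \<le> exp (- m0) * exp (m0 - Xp u)"
      by (intro mult_left_mono) auto
    also have "\<dots> = exp (- Xp u)" by (simp add: exp_add[symmetric])
    also have "\<dots> \<le> exp (- (R u + max 0 (C - (M + 1 / h\<^sup>2) * (u \<bullet> w))))" using xb by simp
    also have "\<dots> \<le> F u + exp (l u) * F (w - u)" by (rule pb)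
    finally have "rwm_proposal h m z * (exp (- m0) * (1 + m0 - Xp u)) \<le> rwm_proposal h m z * (F u + exp (l u) * F (w - u))"
      by (intro mult_left_mono prop_nonneg)
    then show ?thesis unfolding Hc unfolding H_def u_def[symmetric] by (simp add: algebra_simps)
  qed
  have iL: "integrable lborel (\<lambda>z. exp (- m0) * (1 + m0) * rwm_proposal h m z - exp (- m0) * (rwm_proposal h m z * Xp (z - m)))"
    using gi(1)[of m] iP by (intro Bochner_Integration.integrable_diff integrable_mult_right)
  have "integral\<^sup>L lborel (\<lambda>z. exp (- m0) * (1 + m0) * rwm_proposal h m z - exp (- m0) * (rwm_proposal h m z * Xp (z - m)))
        \<le> integral\<^sup>L lborel (\<lambda>z. H z + H (c - z))"
    by (rule integral_mono[OF iL Bochner_Integration.integrable_add[OF iH iHc] pw])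
  also have "\<dots> = 2 * integral\<^sup>L lborel H" using iH iHc vHc by simp
  finally have I2: "exp (- m0) * (1 + m0) - exp (- m0) * integral\<^sup>L lborel (\<lambda>z. rwm_proposal h m z * Xp (z - m))
        \<le> 2 * integral\<^sup>L lborel H"
    using gi[of m] iP by simp
  have E1: "exp (- m0) * integral\<^sup>L lborel (\<lambda>z. rwm_proposal h m z * Xp (z - m)) \<le> exp (- m0) * m0"
    using vP by (intro mult_left_mono) auto
  have E2: "exp (- m0) * (1 + m0) = exp (- m0) + exp (- m0) * m0" by (simp add: algebra_simps)
  have "exp (- m0) \<le> 2 * integral\<^sup>L lborel H" using I2 E1 E2 by linarith
  moreover have "1 / 2 < exp (- m0)" unfolding m0_def by (rule exp_bound_054)
  ultimately have "1 / 4 < integral\<^sup>L lborel mn" using JH by linarith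
  then have "rwm_tv p h x y < 3 / 4" using tv by linarith
  then show ?thesis unfolding p_def .
qed

end
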